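(* Let $V$ be a finite nonempty set, $U,U'\subseteq V$ disjoint, $U''=V\setminus(U\cup U')$, $i\in U$, $j\in U'$, and $\hat x$ a maximally specific partial function on $P_V$. Let $P'_{01}=\{pq\in U\times U'\mid \hat x_{pi}\neq 0\neq \hat x_{jq}\}\setminus\hat x^{-1}(1)$ and $P'_{10}=\big((U''\times U)\cup(U'\times U)\cup(U'\times U'')\big)\setminus\hat x^{-1}(0)$. If $\hat x^{-1}(0)\cap P'_{01}=\emptyset$ and $\hat x^{-1}(1)\cap P'_{10}=\emptyset$, then $\gamma^{ij|1}(X_V[\hat x])\subseteq X_V[\hat x]$.
   Context: $P_V=\{pq\in V^2\mid p\neq q\}$; $X_V$ is the set of $x\in\{0,1\}^{P_V}$ with $x_{pq}+x_{qr}-x_{pr}\le 1$ for all pairwise distinct $p,q,r\in V$. A partial function $\tilde x$ is a map from $\operatorname{dom}(\tilde x)\subseteq P_V$ to $\{0,1\}$, $\tilde x^{-1}(b)$ the pairs mapped to $b$; convention $\tilde x_{aa}=1$ and $x_{aa}=1$ for all $a\in V$, $x\in X_V$. $X_V[\tilde x]=\{x\in X_V\mid x_{pq}=\tilde x_{pq}\ \forall pq\in\operatorname{dom}(\tilde x)\}$. A pair $pq$ is decided if $x_{pq}=x'_{pq}$ for all $x,x'\in X_V[\tilde x]$; $\tilde x$ is maximally specific if $X_V[\tilde x]\ne\emptyset$ and the decided pairs are exactly $\operatorname{dom}(\tilde x)$. For $A,B\subseteq V$ disjoint with $A\cup B=V$, $\sigma_{A\times B}\colon X_V\to X_V$ sets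 $\sigma_{A\times B}(x)_{pq}=0$ if $pq\in A\times B$ and $=x_{pq}$ otherwise. For $ij\in P_V$, $\sigma_{ij}\colon X_V\to X_V$ sets $\sigma_{ij}(x)_{pq}=1$ if $x_{pi}=x_{jq}=1$ and $=x_{pq}$ otherwise. Let $\gamma=\sigma_{ij}\circ\sigma_{(V\setminus U)\times U}\circ\sigma_{U'\times(V\setminus U')}$ and $\gamma^{ij|1}\colon X_V[\hat x]\to X_V$ with $\gamma^{ij|1}(x)=x$ if $x_{ij}=1$ and $\gamma^{ij|1}(x)=\gamma(x)$ if $x_{ij}=0$. *)

theory Defs
  imports Main
begin

text \<open>Pairs P_V. An element x of {0,1}^(P_V) is modelled as a function
  on 'a \<times> 'a to bool (True = 1, False = 0) which is False outside P_V.\<close>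

definition PV :: "'a set \<Rightarrow> ('a \<times> 'a) set" where
  "PV V = {(p, q). p \<in> V \<and> q \<in> V \<and> p \<noteq> q}"

definition xval :: "('a \<times> 'a \<Rightarrow> bool) \<Rightarrow> 'a \<Rightarrow> 'a \<Rightarrow> bool" where
  "xval x p q = (if p = q then True else x (p, q))"

definition XV :: "'a set \<Rightarrow> ('a \<times> 'a \<Rightarrow> bool) set" where
  "XV V = {x. (\<forall>pq. pq \<notin> PV V \<longrightarrow> x pq = False) \<and>
     (\<forall>p\<in>V. \<forall>q\<in>V. \<forall>r\<in>V. p \<noteq> q \<and> q \<noteq> r \<and> p \<noteq> r \<longrightarrow>
        of_bool (x (p, q)) + of_bool (x (q, r)) - of_bool (x (p, r)) \<le> (1::int))}"

definition pval :: "('a \<times> 'a \<Rightarrow> bool option) \<Rightarrow> 'a \<Rightarrow> 'a \<Rightarrow> bool option" where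
  "pval xh p q = (if p = q then Some True else xh (p, q))"

definition preim :: "('a \<times> 'a \<Rightarrow> bool option) \<Rightarrow> bool \<Rightarrow> ('a \<times> 'a) set" where
  "preim xh b = {pq. xh pq = Some b}"

definition XVp :: "'a set \<Rightarrow> ('a \<times> 'a \<Rightarrow> bool option) \<Rightarrow> ('a \<times> 'a \<Rightarrow> bool) set" where
  "XVp V xh = {x \<in> XV V. \<forall>pq \<in> dom xh. xh pq = Some (x pq)}"

definition decided :: "'a set \<Rightarrow> ('a \<times> 'a \<Rightarrow> bool option) \<Rightarrow> ('a \<times> 'a) \<Rightarrow> bool" where
  "decided V xh pq = (\<forall>x \<in> XVp V xh. \<forall>x' \<in> XVp V xh. x pq = x' pq)"

definition max_specific :: "'a set \<Rightarrow> ('a \<times> 'a \<Rightarrow> bool option) \<Rightarrow> bool" where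
  "max_specific V xh = (XVp V xh \<noteq> {} \<and> {pq \<in> PV V. decided V xh pq} = dom xh)"

definition sigma_cut :: "'a set \<Rightarrow> 'a set \<Rightarrow> 'a set \<Rightarrow> ('a \<times> 'a \<Rightarrow> bool) \<Rightarrow> ('a \<times> 'a \<Rightarrow> bool)" where
  "sigma_cut V A B x = (\<lambda>pq. if pq \<in> PV V then (if pq \<in> A \<times> B then False else x pq) else x pq)"

definition sigma_join :: "'a set \<Rightarrow> 'a \<Rightarrow> 'a \<Rightarrow> ('a \<times> 'a \<Rightarrow> bool) \<Rightarrow> ('a \<times> 'a \<Rightarrow> bool)" where
  "sigma_join V i j x = (\<lambda>(p, q). if (p, q) \<in> PV V then
      (if xval x p i \<and> xval x j q then True else x (p, q)) else x (p, q))"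

definition gamma :: "'a set \<Rightarrow> 'a set \<Rightarrow> 'a set \<Rightarrow> 'a \<Rightarrow> 'a \<Rightarrow> ('a \<times> 'a \<Rightarrow> bool) \<Rightarrow> ('a \<times> 'a \<Rightarrow> bool)" where
  "gamma V U U' i j = sigma_join V i j \<circ> sigma_cut V (V - U) U \<circ> sigma_cut V U' (V - U')"

definition gamma1 :: "'a set \<Rightarrow> 'a set \<Rightarrow> 'a set \<Rightarrow> 'a \<Rightarrow> 'a \<Rightarrow> ('a \<times> 'a \<Rightarrow> bool) \<Rightarrow> ('a \<times> 'a \<Rightarrow> bool)" where
  "gamma1 V U U' i j x = (if x (i, j) then x else gamma V U U' i j x)"

end

theory Submission
  imports Defs
begin

definition trx :: "'a set \<Rightarrow> ('a \<times> 'a \<Rightarrow> bool) \<Rightarrow> bool" where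
  "trx V x = (\<forall>p\<in>V. \<forall>q\<in>V. \<forall>r\<in>V. xval x p q \<and> xval x q r \<longrightarrow> xval x p r)"

lemma ob3: "(of_bool a + of_bool b - of_bool c \<le> (1::int)) = (a \<and> b \<longrightarrow> c)"
  by (cases a; cases b; cases c) auto

lemma XV_iff: "x \<in> XV V \<longleftrightarrow> (\<forall>pq. pq \<notin> PV V \<longrightarrow> \<not> x pq) \<and> trx V x"
  unfolding XV_def trx_def xval_def ob3
  by (auto simp: PV_def split: if_splits)

lemma cut_XV:
  assumes "x \<in> XV V" "V \<subseteq> A \<union> B"
  shows "sigma_cut V A B x \<in> XV V"
proof -
  have z: "\<forall>pq. pq \<notin> PV V \<longrightarrow> \<not> x pq" and t: "trx V x" using assms(1) unfolding XV_iff by auto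
  have xv: "p \<in> V \<Longrightarrow> q \<in> V \<Longrightarrow> xval (sigma_cut V A B x) p q = (xval x p q \<and> (p, q) \<notin> A \<times> B \<or> p = q)" for p q
    unfolding xval_def sigma_cut_def PV_def by auto
  show ?thesis unfolding XV_iff
  proof
    show "\<forall>pq. pq \<notin> PV V \<longrightarrow> \<not> sigma_cut V A B x pq" using z unfolding sigma_cut_def by auto
    show "trx V (sigma_cut V A B x)" unfolding trx_def
    proof (intro ballI impI)
      fix p q r assume V: "p \<in> V" "q \<in> V" "r \<in> V" and h: "xval (sigma_cut V A B x) p q \<and> xval (sigma_cut V A B x) q r"
      show "xval (sigma_cut V A B x) p r"
      proof (cases "p = r")
        case True then show ?thesis using xv[OF V(1) V(3)] by simp
      next
        case False
        have "xval x p q" "xval x q r" using h unfolding xv[OF V(1) V(2)] xv[OF V(2) V(3)] by (auto simp: xval_def)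
        hence "xval x p r" using t V unfolding trx_def by blast
        moreover have "(p, r) \<notin> A \<times> B"
        proof
          assume pr: "(p, r) \<in> A \<times> B"
          show False
          proof (cases "q \<in> A")
            case True
            hence "(q, r) \<in> A \<times> B" using pr by auto
            hence "q = r" using h unfolding xv[OF V(2) V(3)] by auto
            thus False using h pr False unfolding xv[OF V(1) V(2)] by auto
          next
            case qA: False
            hence "(p, q) \<in> A \<times> B" using pr V assms(2) by auto
            hence "p = q" using h unfolding xv[OF V(1) V(2)] by auto
            thus False using h pr False unfolding xv[OF V(2) V(3)] by auto
          qed
        qed
        ultimately show ?thesis unfolding xv[OF V(1) V(3)] by simp
      qed
    qed
  qed
qed

lemma join_XV:
  assumes "x \<in> XV V" "i \<in> V" "j \<in> V"
  shows "sigma_join V i j x \<in> XV V"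
proof -
  have z: "\<forall>pq. pq \<notin> PV V \<longrightarrow> \<not> x pq" and t: "trx V x" using assms(1) unfolding XV_iff by auto
  have xv: "p \<in> V \<Longrightarrow> q \<in> V \<Longrightarrow> xval (sigma_join V i j x) p q = (xval x p q \<or> (xval x p i \<and> xval x j q))" for p q
    unfolding xval_def sigma_join_def PV_def by auto
  show ?thesis unfolding XV_iff
  proof
    show "\<forall>pq. pq \<notin> PV V \<longrightarrow> \<not> sigma_join V i j x pq" using z unfolding sigma_join_def by auto
    show "trx V (sigma_join V i j x)" unfolding trx_def
    proof (intro ballI impI)
      fix p q r assume V: "p \<in> V" "q \<in> V" "r \<in> V" and h: "xval (sigma_join V i j x) p q \<and> xval (sigma_join V i j x) q r"
      show "xval (sigma_join V i j x) p r"
        using h V t assms(2,3) unfolding xv[OF V(1) V(2)] xv[OF V(2) V(3)] xv[OF V(1) V(3)] trx_def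
        by metis
    qed
  qed
qed

theorem corollary6p5:
  fixes V U U' :: "'a set" and i j :: 'a and xh :: "'a \<times> 'a \<Rightarrow> bool option"
  assumes "finite V" and "V \<noteq> {}"
    and "U \<subseteq> V" and "U' \<subseteq> V" and "U \<inter> U' = {}"
    and "i \<in> U" and "j \<in> U'"
    and "dom xh \<subseteq> PV V"
    and "max_specific V xh"
    and "preim xh False \<inter>
           ({(p, q) \<in> U \<times> U'. pval xh p i \<noteq> Some False \<and> pval xh j q \<noteq> Some False}
             - preim xh True) = {}"
    and "preim xh True \<inter>
           ((((V - (U \<union> U')) \<times> U) \<union> (U' \<times> U) \<union> (U' \<times> (V - (U \<union> U'))))
             - preim xh False) = {}"
  shows "gamma1 V U U' i j ` XVp V xh \<subseteq> XVp V xh"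
proof
  fix y assume "y \<in> gamma1 V U U' i j ` XVp V xh"
  then obtain x where x: "x \<in> XVp V xh" and y: "y = gamma1 V U U' i j x" by blast
  have xX: "x \<in> XV V" and xa: "\<forall>pq \<in> dom xh. xh pq = Some (x pq)" using x unfolding XVp_def by auto
  show "y \<in> XVp V xh"
  proof (cases "x (i, j)")
    case True then show ?thesis using x y unfolding gamma1_def by simp
  next
    case False
    define z1 where "z1 = sigma_cut V U' (V - U') x"
    define z where "z = sigma_cut V (V - U) U z1"
    have yz: "y = sigma_join V i j z" using False y unfolding gamma1_def gamma_def z_def z1_def by simp
    have iV: "i \<in> V" "j \<in> V" using assms by auto
    have "z1 \<in> XV V" unfolding z1_def by (rule cut_XV[OF xX]) auto
    hence zX: "z \<in> XV V" unfolding z_def by (rule cut_XV) auto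
    have yX: "y \<in> XV V" unfolding yz by (rule join_XV[OF zX iV])
    have zval: "p \<in> V \<Longrightarrow> q \<in> V \<Longrightarrow> xval z p q = (p = q \<or> (xval x p q \<and> (p, q) \<notin> U' \<times> (V - U') \<and> (p, q) \<notin> (V - U) \<times> U))" for p q
      unfolding z_def z1_def xval_def sigma_cut_def PV_def by auto
    have yval: "p \<in> V \<Longrightarrow> q \<in> V \<Longrightarrow> p \<noteq> q \<Longrightarrow> y (p, q) = (xval z p q \<or> (xval z p i \<and> xval z j q))" for p q
      unfolding yz xval_def sigma_join_def PV_def by auto
    have "\<forall>pq \<in> dom xh. xh pq = Some (y pq)"
    proof
      fix pq assume d: "pq \<in> dom xh"
      obtain p q where pq: "pq = (p, q)" by fastforce
      have pV: "p \<in> V" "q \<in> V" "p \<noteq> q" using d assms(8) pq unfolding PV_def by auto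
      have xp: "xh (p, q) = Some (x (p, q))" using xa d pq by auto
      show "xh pq = Some (y pq)"
      proof (cases "x (p, q)")
        case True
        then have "(p, q) \<in> preim xh True" using xp unfolding preim_def by auto
        moreover have "(p, q) \<notin> preim xh False" using xp True unfolding preim_def by auto
        ultimately have "(p, q) \<notin> (((V - (U \<union> U')) \<times> U) \<union> (U' \<times> U) \<union> (U' \<times> (V - (U \<union> U'))))"
          using assms(11) by blast
        hence "xval z p q" using zval[OF pV(1,2)] True pV assms(3,4,5) unfolding xval_def by auto
        thus ?thesis using yval[OF pV] xp True pq by simp
      next
        case xF: False
        have "\<not> xval z p q" using zval[OF pV(1,2)] xF pV unfolding xval_def by auto
        moreover have "\<not> (xval z p i \<and> xval z j q)"
        proof
          assume h: "xval z p i \<and> xval z j q"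
          have pU: "p \<in> U" using h zval[OF pV(1) iV(1)] assms(6) pV(1) by auto
          have qU: "q \<in> U'" using h zval[OF iV(2) pV(2)] assms(7) pV(2) by auto
          have "(p, q) \<in> preim xh False" using xp xF unfolding preim_def by auto
          moreover have "(p, q) \<notin> preim xh True" using xp xF unfolding preim_def by auto
          ultimately have "pval xh p i = Some False \<or> pval xh j q = Some False"
            using assms(10) pU qU by blast
          moreover have "pval xh p i = Some False \<Longrightarrow> \<not> xval x p i"
            using xa unfolding pval_def xval_def by (auto split: if_splits) (metis domI option.inject)
          moreover have "pval xh j q = Some False \<Longrightarrow> \<not> xval x j q"
            using xa unfolding pval_def xval_def by (auto split: if_splits) (metis domI option.inject)
          moreover have "xval x p i" using h zval[OF pV(1) iV(1)] by (auto simp: xval_def)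
          moreover have "xval x j q" using h zval[OF iV(2) pV(2)] by (auto simp: xval_def)
          ultimately show False by blast
        qed
        ultimately show ?thesis using yval[OF pV] xp xF pq by simp
      qed
    qed
    thus ?thesis using yX unfolding XVp_def by auto
  qed
qed

end
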